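(* Let $n\ge2$, let $k$ be an integer with $1\le k\le n$, and let $M$ be any mechanism that is DIC for capacity $k$. Define $\alpha=\frac{2k}{k+1}$ if $k\le\lceil (n-1)/2\rceil$, and $\alpha=\max\{\frac{n-1}{k+1},1\}$ otherwise. Then $M$ is at best an $\alpha$-approximation: for every $\alpha'<\alpha$ there exists a profile $\boldsymbol{x}\in[0,1]^n$ with $\Pi^*(\boldsymbol{x},k)>\alpha'\,\Pi_M(\boldsymbol{x},k)$.
   Context: There are $n$ agents $N=\{1,\dots,n\}$ with locations $x_i\in[0,1]$, profile $\boldsymbol{x}$. A mechanism is a deterministic function $M:[0,1]^n\to[0,1]$ giving the facility location from reported locations. The facility has capacity $k$. Given $\boldsymbol{x}$ and $s$, agent $i$ has higher priority than $j$ if $|s-x_i|<|s-x_j|$, ties broken by a fixed deterministic rule; $N_k^*(\boldsymbol{x},s)$ is the set of the $k$ highest-priority agents. Agent $i$'s ex-post equilibrium utility (of the subgame in which agents choose whether to travel to the capacity-$k$ facility, excess travellers rationed by priority) is $u_i^*(s,\boldsymbol{x},k)=1-|s-x_i|$ if $i\in N_k^*(\boldsymbol{x},s)$ and $0$ otherwise, computed at true locations. $M$ is DIC for capacity $k$ if for every $i$, every true profile $\boldsymbol{x}$, every $x_i'\in[0,1]$, and every reports $\hat{\boldsymbol{x}}_{-i}$ of the others, $u_i^*(M(x_i,\hat{\boldsymbol{x}}_{-i}),\boldsymbol{x},k)\ge u_i^*(M(x_i',\hat{\boldsymbol{x}}_{-i}),\boldsymbol{x},k)$. Optimal welfare: $\Pi^*(\boldsymbol{x},k)=\max_{s\in[0,1]}\sum_i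 u_i^*(s,\boldsymbol{x},k)$; mechanism welfare: $\Pi_M(\boldsymbol{x},k)=\sum_i u_i^*(M(\boldsymbol{x}),\boldsymbol{x},k)$. $M$ is an $\alpha$-approximation if $\max_{\boldsymbol{x}}\Pi^*(\boldsymbol{x},k)/\Pi_M(\boldsymbol{x},k)\le\alpha$. *)

theory Defs
  imports Complex_Main
begin

text \<open>Agents are the elements of a finite type 'n (so n = CARD('n)).
  Ties in priority are broken by a fixed injective rank function r on agents:
  lower rank wins a tie.\<close>

type_synonym 'n profile = "'n \<Rightarrow> real"

definition valid_profile :: "'n profile \<Rightarrow> bool" where
  "valid_profile x \<longleftrightarrow> (\<forall>i. x i \<in> {0..1})"

definition higher_prio :: "('n \<Rightarrow> nat) \<Rightarrow> 'n profile \<Rightarrow> real \<Rightarrow> 'n \<Rightarrow> 'n \<Rightarrow> bool" where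
  "higher_prio r x s i j \<longleftrightarrow>
     \<bar>s - x i\<bar> < \<bar>s - x j\<bar> \<or> (\<bar>s - x i\<bar> = \<bar>s - x j\<bar> \<and> r i < r j)"

definition topk :: "('n::finite \<Rightarrow> nat) \<Rightarrow> 'n profile \<Rightarrow> real \<Rightarrow> nat \<Rightarrow> 'n set" where
  "topk r x s k = {i. card {j. higher_prio r x s j i} < k}"

definition eq_util :: "('n::finite \<Rightarrow> nat) \<Rightarrow> 'n \<Rightarrow> real \<Rightarrow> 'n profile \<Rightarrow> nat \<Rightarrow> real" where
  "eq_util r i s x k = (if i \<in> topk r x s k then 1 - \<bar>s - x i\<bar> else 0)"

definition welfare :: "('n::finite \<Rightarrow> nat) \<Rightarrow> real \<Rightarrow> 'n profile \<Rightarrow> nat \<Rightarrow> real" where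
  "welfare r s x k = (\<Sum>i\<in>UNIV. eq_util r i s x k)"

definition opt_welfare :: "('n::finite \<Rightarrow> nat) \<Rightarrow> 'n profile \<Rightarrow> nat \<Rightarrow> real" where
  "opt_welfare r x k = (SUP s\<in>{0..1}. welfare r s x k)"

definition mech_welfare :: "('n::finite \<Rightarrow> nat) \<Rightarrow> ('n profile \<Rightarrow> real) \<Rightarrow> 'n profile \<Rightarrow> nat \<Rightarrow> real" where
  "mech_welfare r M x k = welfare r (M x) x k"

definition is_mechanism :: "('n profile \<Rightarrow> real) \<Rightarrow> bool" where
  "is_mechanism M \<longleftrightarrow> (\<forall>x. valid_profile x \<longrightarrow> M x \<in> {0..1})"

text \<open>Dominant-strategy incentive compatibility for capacity k: xh are the reports,
  of which only the entries of the other agents matter (entry i is overwritten).\<close>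
definition DIC :: "('n::finite \<Rightarrow> nat) \<Rightarrow> ('n profile \<Rightarrow> real) \<Rightarrow> nat \<Rightarrow> bool" where
  "DIC r M k \<longleftrightarrow>
     (\<forall>i x x' xh. valid_profile x \<longrightarrow> x' \<in> {0..1} \<longrightarrow> valid_profile xh \<longrightarrow>
        eq_util r i (M (xh(i := x i))) x k \<ge> eq_util r i (M (xh(i := x'))) x k)"

definition lb_alpha :: "nat \<Rightarrow> nat \<Rightarrow> real" where
  "lb_alpha n k = (if real k \<le> real_of_int \<lceil>(real n - 1) / 2\<rceil>
                   then 2 * real k / (real k + 1)
                   else max ((real n - 1) / (real k + 1)) 1)"

end

theory Submission
  imports Defs
begin

lemma hp_irrefl: "\<not> higher_prio r x s i i" by (simp add: higher_prio_def)

lemma hp_trans: "higher_prio r x s a b \<Longrightarrow> higher_prio r x s b c \<Longrightarrow> higher_prio r x s a c"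
  unfolding higher_prio_def by (elim disjE conjE) auto

lemma hp_total: "inj r \<Longrightarrow> a \<noteq> b \<Longrightarrow> higher_prio r x s a b \<or> higher_prio r x s b a"
  unfolding higher_prio_def using inj_eq[of r a b] by (metis linorder_neqE_linordered_idom linorder_neqE_nat)

lemma rho_inj:
  fixes r :: "'n::finite \<Rightarrow> nat"
  assumes "inj r"
  shows "inj (\<lambda>i. card {j. higher_prio r x s j i})"
proof (rule injI)
  fix a b assume eq: "card {j. higher_prio r x s j a} = card {j. higher_prio r x s j b}"
  have lt: "card {j. higher_prio r x s j u} < card {j. higher_prio r x s j v}"
    if h: "higher_prio r x s u v" for u v
  proof (rule psubset_card_mono)
    show "finite {j. higher_prio r x s j v}" by simp
    have sub: "{j. higher_prio r x s j u} \<subseteq> {j. higher_prio r x s j v}"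
    proof
      fix j assume "j \<in> {j. higher_prio r x s j u}"
      then have "higher_prio r x s j u" by simp
      then have "higher_prio r x s j v" using h by (rule hp_trans)
      then show "j \<in> {j. higher_prio r x s j v}" by simp
    qed
    have "u \<in> {j. higher_prio r x s j v}" using h by simp
    moreover have "u \<notin> {j. higher_prio r x s j u}" using hp_irrefl[of r x s u] by simp
    ultimately have "{j. higher_prio r x s j u} \<noteq> {j. higher_prio r x s j v}" by blast
    then show "{j. higher_prio r x s j u} \<subset> {j. higher_prio r x s j v}" using sub by (rule psubsetI[rotated])
  qed
  show "a = b"
  proof (rule ccontr)
    assume "a \<noteq> b"
    then have "higher_prio r x s a b \<or> higher_prio r x s b a" by (rule hp_total[OF assms])
    then show False
    proof
      assume "higher_prio r x s a b"
      from lt[OF this] eq show False by simp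
    next
      assume "higher_prio r x s b a"
      from lt[OF this] eq show False by simp
    qed
  qed
qed

lemma rho_less:
  fixes r :: "'n::finite \<Rightarrow> nat"
  shows "card {j. higher_prio r x s j i} < card (UNIV::'n set)"
proof (rule psubset_card_mono)
  show "finite (UNIV::'n set)" by simp
  show "{j. higher_prio r x s j i} \<subset> UNIV" using hp_irrefl[of r x s i] by blast
qed

lemma card_topk:
  fixes r :: "'n::finite \<Rightarrow> nat"
  assumes "inj r" "k \<le> card (UNIV::'n set)"
  shows "card (topk r x s k) = k"
proof -
  define \<rho> where "\<rho> = (\<lambda>i. card {j. higher_prio r x s j i})"
  have inj: "inj \<rho>" unfolding \<rho>_def using rho_inj assms(1) .
  have sub: "\<rho> ` UNIV \<subseteq> {..<card (UNIV::'n set)}" unfolding \<rho>_def using rho_less by auto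
  have cd: "card (\<rho> ` UNIV) = card {..<card (UNIV::'n set)}"
    using card_image[OF inj] by simp
  have img: "\<rho> ` UNIV = {..<card (UNIV::'n set)}"
    by (rule card_subset_eq[OF _ sub cd]) simp
  have t: "topk r x s k = {i. \<rho> i < k}" unfolding topk_def \<rho>_def by simp
  have "\<rho> ` {i. \<rho> i < k} = {..<k}"
  proof
    show "\<rho> ` {i. \<rho> i < k} \<subseteq> {..<k}" by auto
    show "{..<k} \<subseteq> \<rho> ` {i. \<rho> i < k}"
    proof
      fix m assume "m \<in> {..<k}"
      then have "m \<in> \<rho> ` UNIV" using img assms(2) by auto
      then obtain i where "m = \<rho> i" by auto
      then show "m \<in> \<rho> ` {i. \<rho> i < k}" using \<open>m \<in> {..<k}\<close> by auto
    qed
  qed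
  moreover have "card (\<rho> ` {i. \<rho> i < k}) = card {i. \<rho> i < k}"
    by (rule card_image) (use inj in \<open>auto intro: inj_on_subset\<close>)
  ultimately show ?thesis using t by simp
qed

lemma welfare_eq: "welfare r s x k = (\<Sum>i\<in>topk r x s k. 1 - \<bar>s - x i\<bar>)"
  unfolding welfare_def eq_util_def by (simp add: sum.If_cases)

lemma welfare_const:
  fixes r :: "'n::finite \<Rightarrow> nat"
  assumes "inj r" "k \<le> card (UNIV::'n set)"
  shows "welfare r s (\<lambda>i. p) k = real k * (1 - \<bar>s - p\<bar>)"
  unfolding welfare_eq using card_topk[OF assms] by simp

lemma welfare_le:
  fixes r :: "'n::finite \<Rightarrow> nat"
  shows "welfare r s x k \<le> real (card (UNIV::'n set))"
proof -
  have "welfare r s x k \<le> (\<Sum>i\<in>(UNIV::'n set). 1)"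
    unfolding welfare_def eq_util_def by (rule sum_mono) auto
  then show ?thesis by simp
qed

lemma util_nonneg: "valid_profile x \<Longrightarrow> s \<in> {0..1} \<Longrightarrow> 0 \<le> 1 - \<bar>s - x i\<bar>"
  unfolding valid_profile_def by (drule spec[of _ i]) auto

lemma welfare_nonneg:
  assumes "valid_profile x" "s \<in> {0..1}"
  shows "0 \<le> welfare r s x k"
  unfolding welfare_eq by (rule sum_nonneg) (use util_nonneg[OF assms] in auto)

lemma opt_ge:
  fixes r :: "'n::finite \<Rightarrow> nat"
  assumes "s \<in> {0..1}"
  shows "welfare r s x k \<le> opt_welfare r x k"
  unfolding opt_welfare_def
proof (rule cSUP_upper[OF assms])
  show "bdd_above ((\<lambda>s. welfare r s x k) ` {0..1})"
    by (rule bdd_aboveI2[where M="real (card (UNIV::'n set))"]) (rule welfare_le)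
qed

lemma welfare_ge_group:
  fixes r :: "'n::finite \<Rightarrow> nat"
  assumes "inj r" "valid_profile x" "s \<in> {0..1}" "k \<le> card (UNIV::'n set)"
  shows "min (real k) (real (card {i. x i = s})) \<le> welfare r s x k"
proof (cases "k \<le> card {i. x i = s}")
  case True
  have "topk r x s k \<subseteq> {i. x i = s}"
  proof
    fix i assume i: "i \<in> topk r x s k"
    show "i \<in> {i. x i = s}"
    proof (rule ccontr)
      assume "i \<notin> {i. x i = s}"
      then have "{i. x i = s} \<subseteq> {j. higher_prio r x s j i}"
        by (auto simp: higher_prio_def)
      then have "card {i. x i = s} \<le> card {j. higher_prio r x s j i}"
        by (rule card_mono[rotated]) simp
      then show False using i True unfolding topk_def by simp
    qed
  qed
  then have "welfare r s x k = (\<Sum>i\<in>topk r x s k. 1)"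
    unfolding welfare_eq by (intro sum.cong) auto
  also have "\<dots> = real k" using card_topk[OF assms(1,4)] by simp
  finally show ?thesis by simp
next
  case False
  have sub: "{i. x i = s} \<subseteq> topk r x s k"
  proof
    fix i assume i: "i \<in> {i. x i = s}"
    have "{j. higher_prio r x s j i} \<subseteq> {i. x i = s} - {i}"
      using i hp_irrefl[of r x s i] by (auto simp: higher_prio_def)
    then have "card {j. higher_prio r x s j i} \<le> card ({i. x i = s} - {i})"
      by (rule card_mono[rotated]) simp
    also have "\<dots> < card {i. x i = s}"
      by (rule card_Diff1_less) (use i in auto)
    finally show "i \<in> topk r x s k" using False unfolding topk_def by simp
  qed
  have "real (card {i. x i = s}) = (\<Sum>i\<in>{i. x i = s}. 1 - \<bar>s - x i\<bar>)" by simp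
  also have "\<dots> \<le> (\<Sum>i\<in>topk r x s k. 1 - \<bar>s - x i\<bar>)"
    by (rule sum_mono2) (use sub util_nonneg[OF assms(2,3)] in auto)
  finally show ?thesis unfolding welfare_eq by simp
qed


lemma lb_le2: "1 \<le> k \<Longrightarrow> lb_alpha n k \<le> 2"
proof -
  assume k: "1 \<le> k"
  show ?thesis
  proof (cases "real k \<le> real_of_int \<lceil>(real n - 1) / 2\<rceil>")
    case True then show ?thesis unfolding lb_alpha_def using k by (simp add: field_simps)
  next
    case False
    have "(real n - 1) / 2 \<le> real_of_int \<lceil>(real n - 1) / 2\<rceil>" by (rule le_of_int_ceiling)
    then have "(real n - 1) / 2 < real k" using False by linarith
    then have "real n - 1 < 2 * real k" by (simp add: field_simps)
    then have "real n - 1 \<le> 2 * (real k + 1)" by (simp add: algebra_simps)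
    then have "(real n - 1) / (real k + 1) \<le> 2" by (simp add: field_simps)
    then show ?thesis unfolding lb_alpha_def using False by simp
  qed
qed

lemma lb_gt1_k: "2 \<le> n \<Longrightarrow> k \<le> n \<Longrightarrow> 1 < lb_alpha n k \<Longrightarrow> k < n"
proof (rule ccontr)
  assume n: "2 \<le> n" and kn: "k \<le> n" and lb: "1 < lb_alpha n k" and "\<not> k < n"
  then have kn': "k = n" by simp
  have c: "real_of_int \<lceil>(real n - 1) / 2\<rceil> < real n"
  proof -
    have "(real n - 1) / 2 \<le> real_of_int (int n - 1)" using n by simp
    then have "\<lceil>(real n - 1) / 2\<rceil> \<le> int n - 1" by (rule ceiling_le)
    then show ?thesis by linarith
  qed
  have "(real n - 1) / (real n + 1) \<le> 1" by simp
  then have "lb_alpha n k = 1" unfolding lb_alpha_def using kn' c by simp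
  then show False using lb by simp
qed

lemma lb_arith:
  fixes n k a :: nat
  assumes "2 \<le> n" "1 \<le> k" "k < n" "a \<le> n - 1" "1 < lb_alpha n k"
  shows "lb_alpha n k * (real k + 1) / 2 \<le> max (min (real k) (real a)) (min (real k) (real (n - 1 - a)))"
proof (cases "real k \<le> real_of_int \<lceil>(real n - 1) / 2\<rceil>")
  case True
  have lb: "lb_alpha n k * (real k + 1) / 2 = real k"
    unfolding lb_alpha_def using True by (simp add: field_simps)
  have "k \<le> a \<or> k \<le> n - 1 - a"
  proof (rule ccontr)
    assume "\<not> (k \<le> a \<or> k \<le> n - 1 - a)"
    then have "a + 1 \<le> k" "n - 1 - a + 1 \<le> k" by auto
    then have "n + 1 \<le> 2 * k" using assms by arith
    then have "(real n - 1) / 2 \<le> real_of_int (int k - 1)" by simp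
    then have "\<lceil>(real n - 1) / 2\<rceil> \<le> int k - 1" by (rule ceiling_le)
    then show False using True by linarith
  qed
  then show ?thesis using lb by auto
next
  case False
  have "(real n - 1) / 2 \<le> real_of_int \<lceil>(real n - 1) / 2\<rceil>" by (rule le_of_int_ceiling)
  then have k2: "(real n - 1) / 2 \<le> real k" using False by linarith
  have "1 < (real n - 1) / (real k + 1)"
    using assms(5) False unfolding lb_alpha_def by (auto simp: max_def split: if_splits)
  then have "lb_alpha n k = (real n - 1) / (real k + 1)"
    unfolding lb_alpha_def using False by simp
  then have lb: "lb_alpha n k * (real k + 1) / 2 = (real n - 1) / 2"
    by (simp add: field_simps)
  have "(real n - 1) / 2 \<le> real a \<or> (real n - 1) / 2 \<le> real (n - 1 - a)"
    using assms by auto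
  then show ?thesis using lb k2 by auto
qed

lemma dic_contra:
  fixes r :: "'n::finite \<Rightarrow> nat"
  assumes "inj r" "1 \<le> k" "k < card (UNIV::'n set)" "DIC r M k" "valid_profile xh"
    and "c = M (xh(j := y))" "y \<in> {0..1}" "c \<in> {0..1}"
    and "c' = M (xh(j := y'))" "y' \<in> {0..1}" "c' \<in> {0..1}"
    and far: "\<bar>c' - y\<bar> < \<bar>c' - c\<bar>" and ne: "c \<noteq> y"
  shows False
proof -
  define x where "x = (\<lambda>l. if l = j then y else c)"
  have vx: "valid_profile x" unfolding x_def valid_profile_def using assms(7,8) by auto
  have xj: "x j = y" unfolding x_def by simp
  have d: "eq_util r j (M (xh(j := x j))) x k \<ge> eq_util r j (M (xh(j := y'))) x k"
    using assms(4) vx assms(10) assms(5) unfolding DIC_def by blast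
  have "UNIV - {j} \<subseteq> {l. higher_prio r x c l j}"
    using ne unfolding x_def higher_prio_def by auto
  then have "card (UNIV - {j}) \<le> card {l. higher_prio r x c l j}"
    by (rule card_mono[rotated]) simp
  moreover have "card (UNIV - {j}) = card (UNIV::'n set) - 1" by (simp add: card_Diff_singleton)
  ultimately have "j \<notin> topk r x c k" using assms(3) unfolding topk_def by auto
  then have u0: "eq_util r j c x k = 0" unfolding eq_util_def by simp
  have "{l. higher_prio r x c' l j} = {}"
    using far hp_irrefl[of r x c' j] unfolding x_def higher_prio_def by auto
  then have "j \<in> topk r x c' k" using assms(2) unfolding topk_def by simp
  then have u1: "eq_util r j c' x k = 1 - \<bar>c' - y\<bar>" unfolding eq_util_def xj by simp
  have "\<bar>c' - c\<bar> \<le> 1" using assms(8,11) by auto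
  then have "0 < 1 - \<bar>c' - y\<bar>" using far by linarith
  then show False using d u0 u1 xj assms(6,9) by simp
qed


lemma pivot_half:
  fixes r :: "'n::finite \<Rightarrow> nat"
  assumes "inj r" "1 \<le> k" "k < card (UNIV::'n set)" "is_mechanism M" "DIC r M k" "j \<notin> S"
    and g1: "M (\<lambda>i. if i \<in> S then 0 else 1) > 1/2"
    and g2: "M (\<lambda>i. if i \<in> insert j S then 0 else 1) \<le> 1/2"
  shows "M (\<lambda>i. if i \<in> S then 0 else if i = j then 1/2 else 1) = 1/2"
proof -
  define Z where "Z = (\<lambda>i. if i \<in> S then 0 else if i = j then 1/2 else (1::real))"
  have vZ: "valid_profile Z" unfolding Z_def valid_profile_def by auto
  have cZ: "M Z \<in> {0..1}" using assms(4) vZ unfolding is_mechanism_def by blast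
  have Zh: "Z(j := 1/2) = Z" using assms(6) by (intro ext) (auto simp: Z_def)
  have Z1: "Z(j := 1) = (\<lambda>i. if i \<in> S then 0 else 1)" using assms(6) by (intro ext) (auto simp: Z_def)
  have Z0: "Z(j := 0) = (\<lambda>i. if i \<in> insert j S then 0 else 1)" using assms(6) by (intro ext) (auto simp: Z_def)
  have v1: "valid_profile (\<lambda>i::'n. if i \<in> S then 0 else 1)" unfolding valid_profile_def by auto
  have v0: "valid_profile (\<lambda>i::'n. if i \<in> insert j S then 0 else 1)" unfolding valid_profile_def by auto
  have c1: "M (\<lambda>i. if i \<in> S then 0 else 1) \<in> {0..1}" using assms(4) v1 unfolding is_mechanism_def by blast
  have c0: "M (\<lambda>i. if i \<in> insert j S then 0 else 1) \<in> {0..1}" using assms(4) v0 unfolding is_mechanism_def by blast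
  have "M Z = 1/2"
  proof (rule ccontr)
    assume ne: "M Z \<noteq> 1/2"
    then consider "M Z < 1/2" | "M Z > 1/2" by linarith
    then show False
    proof cases
      case 1
      show False
        by (rule dic_contra[OF assms(1,2,3,5) vZ, of "M Z" j "1/2" "M (\<lambda>i. if i \<in> S then 0 else 1)" 1])
           (use Zh Z1 cZ c1 g1 1 ne in auto)
    next
      case 2
      show False
        by (rule dic_contra[OF assms(1,2,3,5) vZ, of "M Z" j "1/2" "M (\<lambda>i. if i \<in> insert j S then 0 else 1)" 0])
           (use Zh Z0 cZ c0 g2 2 ne in auto)
    qed
  qed
  then show ?thesis unfolding Z_def .
qed

lemma final_step:
  fixes a b m w :: real
  assumes "b * m \<le> w" "0 \<le> m" "0 < w" "a < b"
  shows "a * m < w"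
proof (cases "m = 0")
  case True then show ?thesis using assms by simp
next
  case False
  then have "a * m < b * m" using assms by (simp add: mult_strict_right_mono)
  then show ?thesis using assms by linarith
qed

lemma pivot_exists:
  fixes g :: "'n::finite set \<Rightarrow> real"
  assumes "g {} > 1/2" "\<not> g UNIV > 1/2"
  shows "\<exists>S j. j \<notin> S \<and> g S > 1/2 \<and> \<not> g (insert j S) > 1/2"
proof (rule ccontr)
  assume "\<not> ?thesis"
  then have step: "\<And>S j. j \<notin> S \<Longrightarrow> g S > 1/2 \<Longrightarrow> g (insert j S) > 1/2" by blast
  have "\<And>A. finite A \<Longrightarrow> g A > 1/2"
  proof -
    fix A :: "'n set" assume "finite A"
    then show "g A > 1/2"
    proof (induction A rule: finite_induct)
      case empty
      show ?case by (rule assms(1))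
    next
      case (insert x F)
      show ?case by (rule step[OF insert(2) insert(3)])
    qed
  qed
  then have "g UNIV > 1/2" by simp
  then show False using assms(2) by blast
qed


theorem theorem4p3:
  fixes r :: "'n::finite \<Rightarrow> nat" and M :: "'n profile \<Rightarrow> real" and k :: nat
  assumes "card (UNIV :: 'n set) \<ge> 2"
    and "inj r"
    and "1 \<le> k" and "k \<le> card (UNIV :: 'n set)"
    and "is_mechanism M"
    and "DIC r M k"
  shows "\<forall>\<alpha>'. \<alpha>' < lb_alpha (card (UNIV :: 'n set)) k \<longrightarrow>
           (\<exists>x. valid_profile x \<and> opt_welfare r x k > \<alpha>' * mech_welfare r M x k)"
proof (intro allI impI)
  fix a :: real
  assume a: "a < lb_alpha (card (UNIV :: 'n set)) k"
  define n where "n = card (UNIV :: 'n set)"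
  define lb where "lb = lb_alpha n k"
  have a': "a < lb" using a unfolding lb_def n_def .
  have mechin: "\<And>x. valid_profile x \<Longrightarrow> M x \<in> {0..1}"
    using assms(5) unfolding is_mechanism_def by blast
  have kn: "k \<le> n" using assms(4) unfolding n_def .
  define E1 where "E1 = (\<lambda>i::'n. 1::real)"
  define E0 where "E0 = (\<lambda>i::'n. 0::real)"
  have vE1: "valid_profile E1" unfolding E1_def valid_profile_def by auto
  have vE0: "valid_profile E0" unfolding E0_def valid_profile_def by auto
  show "\<exists>x. valid_profile x \<and> opt_welfare r x k > a * mech_welfare r M x k"
  proof (cases "lb \<le> 1")
    case True
    have m0: "M E0 \<in> {0..1}" using mechin vE0 .
    have o1: "real k \<le> opt_welfare r E0 k"
      using opt_ge[of 0 r E0 k] welfare_const[OF assms(2,4), of 0 0] unfolding E0_def by simp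
    have mo: "mech_welfare r M E0 k \<le> opt_welfare r E0 k"
      unfolding mech_welfare_def using opt_ge[OF m0] .
    have mn: "0 \<le> mech_welfare r M E0 k"
      unfolding mech_welfare_def using welfare_nonneg[OF vE0 m0] .
    have "lb * mech_welfare r M E0 k \<le> 1 * mech_welfare r M E0 k"
      using True mn by (rule mult_right_mono)
    then have "lb * mech_welfare r M E0 k \<le> opt_welfare r E0 k" using mo by simp
    moreover have "0 < opt_welfare r E0 k" using o1 assms(3) by simp
    ultimately show ?thesis using final_step[OF _ mn _ a'] vE0 by blast
  next
    case False
    then have lb1: "1 < lb" by simp
    have kn': "k < n" using lb_gt1_k[of n k] assms(1) kn lb1 unfolding lb_def n_def by simp
    have lb2: "lb \<le> 2" unfolding lb_def using lb_le2 assms(3) .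
    show ?thesis
    proof (cases "M E1 \<le> 1/2")
      case True
      have m: "M E1 \<in> {0..1}" using mechin vE1 .
      have o1: "real k \<le> opt_welfare r E1 k"
        using opt_ge[of 1 r E1 k] welfare_const[OF assms(2,4), of 1 1] unfolding E1_def by simp
      have me: "mech_welfare r M E1 k = real k * M E1"
        unfolding mech_welfare_def using welfare_const[OF assms(2,4), of "M E1" 1] m
        unfolding E1_def by simp
      have mn: "0 \<le> mech_welfare r M E1 k" using me m by simp
      have "lb * mech_welfare r M E1 k \<le> 2 * mech_welfare r M E1 k"
        using lb2 mn by (rule mult_right_mono)
      also have "\<dots> \<le> real k"
      proof -
        have "real k * (2 * M E1) \<le> real k * 1" using True by (intro mult_left_mono) auto
        then show ?thesis using me by (simp add: algebra_simps)
      qed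
      finally have "lb * mech_welfare r M E1 k \<le> opt_welfare r E1 k" using o1 by simp
      moreover have "0 < opt_welfare r E1 k" using o1 assms(3) by simp
      ultimately show ?thesis using final_step[OF _ mn _ a'] vE1 by blast
    next
      case F1: False
      show ?thesis
      proof (cases "M E0 \<ge> 1/2")
        case True
        have m: "M E0 \<in> {0..1}" using mechin vE0 .
        have o1: "real k \<le> opt_welfare r E0 k"
          using opt_ge[of 0 r E0 k] welfare_const[OF assms(2,4), of 0 0] unfolding E0_def by simp
        have me: "mech_welfare r M E0 k = real k * (1 - M E0)"
          unfolding mech_welfare_def using welfare_const[OF assms(2,4), of "M E0" 0] m
          unfolding E0_def by simp
        have mn: "0 \<le> mech_welfare r M E0 k" using me m by simp
        have "lb * mech_welfare r M E0 k \<le> 2 * mech_welfare r M E0 k"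
          using lb2 mn by (rule mult_right_mono)
        also have "\<dots> \<le> real k"
      proof -
        have "real k * (2 * (1 - M E0)) \<le> real k * 1" using True by (intro mult_left_mono) auto
        then show ?thesis using me by (simp add: algebra_simps)
      qed
        finally have "lb * mech_welfare r M E0 k \<le> opt_welfare r E0 k" using o1 by simp
        moreover have "0 < opt_welfare r E0 k" using o1 assms(3) by simp
        ultimately show ?thesis using final_step[OF _ mn _ a'] vE0 by blast
      next
        case F0: False
        define g where "g S = M (\<lambda>i. if i \<in> S then 0 else 1)" for S
        have "g {} = M E1" unfolding g_def E1_def by simp
        moreover have "g UNIV = M E0" unfolding g_def E0_def by simp
        ultimately obtain S j where jS: "j \<notin> S" and gS: "g S > 1/2" and gj: "\<not> g (insert j S) > 1/2"
          using pivot_exists[of g] F1 F0 by force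
        define Z where "Z = (\<lambda>i. if i \<in> S then 0 else if i = j then 1/2 else (1::real))"
        have vZ: "valid_profile Z" unfolding Z_def valid_profile_def by auto
        have g1': "M (\<lambda>i. if i \<in> S then 0 else 1) > 1/2" using gS by (simp only: g_def)
        have g2': "M (\<lambda>i. if i \<in> insert j S then 0 else 1) \<le> 1/2"
          using gj by (simp only: g_def not_less)
        have MZ: "M Z = 1/2" unfolding Z_def
          by (rule pivot_half[OF assms(2,3) kn'[unfolded n_def] assms(5,6) jS g1' g2'])
        have jt: "j \<in> topk r Z (1/2) k"
        proof -
          have "{l. higher_prio r Z (1/2) l j} = {}"
            using jS hp_irrefl[of r Z "1/2" j] unfolding Z_def higher_prio_def by auto
          then show ?thesis using assms(3) unfolding topk_def by simp
        qed
        have "mech_welfare r M Z k = (\<Sum>i\<in>topk r Z (1/2) k. 1 - \<bar>1/2 - Z i\<bar>)"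
          unfolding mech_welfare_def MZ welfare_eq ..
        also have "\<dots> = (1 - \<bar>1/2 - Z j\<bar>) + (\<Sum>i\<in>topk r Z (1/2) k - {j}. 1 - \<bar>1/2 - Z i\<bar>)"
          using jt by (simp add: sum.remove)
        also have "\<dots> = 1 + (\<Sum>i\<in>topk r Z (1/2) k - {j}. 1/2)"
          using jS by (intro arg_cong2[where f="(+)"] sum.cong) (auto simp: Z_def)
        also have "\<dots> = 1 + real (k - 1) / 2"
          using card_topk[OF assms(2,4), of Z "1/2"] jt by (simp add: card_Diff_singleton)
        also have "\<dots> = (real k + 1) / 2" using assms(3) by (simp add: of_nat_diff field_simps)
        finally have me: "mech_welfare r M Z k = (real k + 1) / 2" .
        define A where "A = card S"
        have G0: "{i. Z i = 0} = S" using jS unfolding Z_def by auto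
        have G1: "{i. Z i = 1} = - insert j S" unfolding Z_def by auto
        have cA: "A \<le> n - 1"
        proof -
          have "S \<subseteq> UNIV - {j}" using jS by auto
          then have "card S \<le> card (UNIV - {j})" by (rule card_mono[rotated]) simp
          then show ?thesis unfolding A_def n_def by (simp add: card_Diff_singleton)
        qed
        have cB: "card (- insert j S) = n - 1 - A"
        proof -
          have e: "- insert j S = UNIV - insert j S" by auto
          have "card (UNIV - insert j S) = card (UNIV::'n set) - card (insert j S)"
            by (rule card_Diff_subset) auto
          moreover have "card (insert j S) = A + 1" unfolding A_def using jS by simp
          ultimately show ?thesis unfolding e n_def by simp
        qed
        have o0: "min (real k) (real A) \<le> opt_welfare r Z k"
          using welfare_ge_group[OF assms(2) vZ, of 0 k] assms(4) opt_ge[of 0 r Z k]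
          unfolding G0 A_def by simp
        have o1: "min (real k) (real (n - 1 - A)) \<le> opt_welfare r Z k"
          using welfare_ge_group[OF assms(2) vZ, of 1 k] assms(4) opt_ge[of 1 r Z k]
          unfolding G1 cB by simp
        have "lb * mech_welfare r M Z k \<le> max (min (real k) (real A)) (min (real k) (real (n - 1 - A)))"
          unfolding me lb_def using lb_arith[of n k A] assms(1,3) kn' cA lb1
          unfolding lb_def n_def by (simp add: mult.assoc)
        also have "\<dots> \<le> opt_welfare r Z k" using o0 o1 by simp
        finally have h: "lb * mech_welfare r M Z k \<le> opt_welfare r Z k" .
        have mn: "0 \<le> mech_welfare r M Z k" using me by simp
        have "mech_welfare r M Z k \<le> opt_welfare r Z k"
          unfolding mech_welfare_def MZ by (rule opt_ge) simp
        then have "0 < opt_welfare r Z k" using me by simp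
        then show ?thesis using final_step[OF h mn _ a'] vZ by blast
      qed
    qed
  qed
qed

end
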